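(* Let $b>0$ and $c>0$, and let $A(b,c)>0$ and $B(b,c)>0$ be defined by $2A(b,c)^2=\sqrt{b^4+c^2}+b^2$ and $2B(b,c)^2=\sqrt{b^4+c^2}-b^2$. Then $$\sum_{n\ge1}\chi(n)\frac{n}{(n^2+b^2)^2+c^2}=\frac{\pi}{4c}\,\frac{\sinh(\frac{\pi}{2}A(b,c))\sin(\frac{\pi}{2}B(b,c))}{\sinh^2(\frac{\pi}{2} A(b,c))+\cos^{2}(\frac{\pi}{2}B(b,c))},$$ $$\sum_{n\ge1}\chi(n)\frac{n(n^2+b^2)}{(n^2+b^2)^2+c^2}=\frac{\pi}{4}\,\frac{\cosh(\frac{\pi}{2}A(b,c))\cos(\frac{\pi}{2}B(b,c))}{\cosh^2(\frac{\pi}{2} A(b,c))-\sin^{2}(\frac{\pi}{2}B(b,c))}.$$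
   Context: The function $\chi$ on integers is $\chi(n)=0$ if $n$ is even, $\chi(n)=1$ if $n\equiv1\pmod 4$, and $\chi(n)=-1$ if $n\equiv 3\pmod 4$. *)

theory Defs
  imports "HOL-Analysis.Analysis"
begin

definition chi :: "int \<Rightarrow> int" where
  "chi n = (if even n then 0 else if n mod 4 = 1 then 1 else -1)"

definition Afun :: "real \<Rightarrow> real \<Rightarrow> real" where
  "Afun b c = sqrt ((sqrt (b^4 + c^2) + b^2) / 2)"

definition Bfun :: "real \<Rightarrow> real \<Rightarrow> real" where
  "Bfun b c = sqrt ((sqrt (b^4 + c^2) - b^2) / 2)"

end

theory Submission imports Defs begin


lemma aux: "(a::complex)*p*b + a*(b*q*(-1)) = R \<Longrightarrow> (a*b)*(p-q) = R"
  by (simp add: algebra_simps)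

lemma aux2:
  fixes s P D c :: complex
  assumes "s \<noteq> 0" "P \<noteq> 0" "(P/s)*D = -(P*(c*P))/s^2"
  shows "-D = P*c/s"
proof -
  have "D = (s/P) * ((P/s)*D)" using assms(1,2) by simp
  also have "\<dots> = (s/P)*(-(P*(c*P))/s^2)" using assms(3) by simp
  also have "\<dots> = -(P*c/s)" using assms(1,2) by (simp add: field_simps power2_eq_square)
  finally show ?thesis by simp
qed

lemma digamma_refl:
  fixes z :: complex
  assumes "z \<notin> \<int>"
  shows "Digamma (1 - z) - Digamma z = of_real pi * cos (of_real pi * z) / sin (of_real pi * z)"
proof -
  have z1: "z \<notin> \<int>\<^sub>\<le>\<^sub>0" using assms nonpos_Ints_subset_Ints by blast
  have z2: "1 - z \<notin> \<int>\<^sub>\<le>\<^sub>0"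
  proof
    assume "1 - z \<in> \<int>\<^sub>\<le>\<^sub>0"
    hence "1 - z \<in> \<int>" using nonpos_Ints_subset_Ints by blast
    hence "1 - (1 - z) \<in> \<int>" by (intro Ints_diff) auto
    thus False using assms by simp
  qed
  have s: "sin (of_real pi * z) \<noteq> 0"
  proof
    assume "sin (of_real pi * z) = 0"
    then obtain n :: int where "of_real pi * z = of_real (n * pi)" by (auto simp: sin_eq_0)
    hence "z = of_int n" by (simp add: field_simps)
    thus False using assms by auto
  qed
  have g1: "Gamma z \<noteq> 0" "Gamma (1 - z) \<noteq> 0" using z1 z2 by (auto simp: Gamma_eq_zero_iff)
  have d1: "((\<lambda>t. Gamma t * Gamma (1 - t)) has_field_derivative
     (Gamma z * Digamma z * Gamma (1 - z) + Gamma z * (Gamma (1 - z) * Digamma (1 - z) * (-1)))) (at z)"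
    using z1 z2 by (auto intro!: derivative_eq_intros)
  have d2: "((\<lambda>t. of_real pi / sin (of_real pi * t)) has_field_derivative
     (- (of_real pi * (cos (of_real pi * z) * of_real pi)) / (sin (of_real pi * z))^2)) (at z)"
    using s by (auto intro!: derivative_eq_intros simp: power2_eq_square)
  have eq: "(\<lambda>t::complex. Gamma t * Gamma (1 - t)) = (\<lambda>t. of_real pi / sin (of_real pi * t))"
    by (rule ext) (rule Gamma_reflection_complex)
  have "Gamma z * Digamma z * Gamma (1 - z) + Gamma z * (Gamma (1 - z) * Digamma (1 - z) * (-1))
      = - (of_real pi * (cos (of_real pi * z) * of_real pi)) / (sin (of_real pi * z))^2"
    using DERIV_unique[OF d1[unfolded eq] d2] .
  hence "(Gamma z * Gamma (1 - z)) * (Digamma z - Digamma (1 - z))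
      = - (of_real pi * (cos (of_real pi * z) * of_real pi)) / (sin (of_real pi * z))^2"
    by (rule aux)
  hence "(of_real pi / sin (of_real pi * z)) * (Digamma z - Digamma (1 - z))
      = - (of_real pi * (cos (of_real pi * z) * of_real pi)) / (sin (of_real pi * z))^2"
    by (simp only: Gamma_reflection_complex)
  from aux2[OF s _ this] show ?thesis by simp
qed



lemma dg_diff:
  fixes x1 x2 :: complex
  assumes "x1 \<noteq> 0" "x2 \<noteq> 0"
  shows "(\<lambda>j. inverse (of_nat j + x1) - inverse (of_nat j + x2)) sums (Digamma x2 - Digamma x1)"
proof -
  have a: "(\<lambda>n. inverse (of_nat (Suc n)) - inverse (x + of_nat n)) sums (Digamma x + euler_mascheroni)"
    if "x \<noteq> 0" for x :: complex
    using summable_Digamma[OF that] by (simp add: Digamma_def summable_sums)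
  from sums_diff[OF a[OF assms(2)] a[OF assms(1)]] show ?thesis
    by (simp add: add.commute)
qed

lemma trig_aux:
  fixes u :: complex
  defines "a \<equiv> of_real pi * ((1 + u) / 4)"
  assumes "sin a \<noteq> 0" "cos a \<noteq> 0"
  shows "cos a / sin a + cos (of_real pi * ((1 - u)/4)) / sin (of_real pi * ((1 - u)/4))
         = 2 / cos (of_real pi * u / 2)"
proof -
  have e: "of_real pi * ((1 - u)/4) = of_real (pi/2) - a" unfolding a_def by (simp add: field_simps)
  have c2: "cos (of_real (pi/2) :: complex) = 0" "sin (of_real (pi/2) :: complex) = 1"
    by (simp_all only: cos_of_real sin_of_real) simp_all
  have aa: "a + a = of_real (pi/2) + of_real pi * u / 2" unfolding a_def by (simp add: field_simps)
  have "cos (of_real pi * u / 2) = sin (of_real (pi/2) + of_real pi * u / 2)"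
    by (simp add: sin_add c2)
  also have "\<dots> = 2 * sin a * cos a" unfolding aa[symmetric] by (simp only: sin_add) (simp add: algebra_simps)
  finally have cu: "cos (of_real pi * u / 2) = 2 * sin a * cos a" .
  have "cos a / sin a + cos (of_real pi * ((1 - u)/4)) / sin (of_real pi * ((1 - u)/4))
      = cos a / sin a + sin a / cos a" unfolding e by (simp add: sin_diff cos_diff c2)
  also have "\<dots> = 1 / (sin a * cos a)" using assms(2,3) by (simp add: field_simps power2_eq_square)
  finally show ?thesis using cu by simp
qed

lemma Im_nz_not_Int: "Im (z::complex) \<noteq> 0 \<Longrightarrow> z \<notin> \<int>"
  by (auto elim!: Ints_cases)

lemma sin_nz: "Im (z::complex) \<noteq> 0 \<Longrightarrow> sin (of_real pi * z) \<noteq> 0"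
  by (auto simp: sin_eq_0)

lemma cos_nz: "Im (z::complex) \<noteq> 0 \<Longrightarrow> cos (of_real pi * z) \<noteq> 0"
proof
  assume "Im z \<noteq> 0" "cos (of_real pi * z) = 0"
  then obtain n :: int where "of_real pi * z = complex_of_real (n * pi) + of_real pi/2"
    by (auto simp: cos_eq_0)
  hence "Im (of_real pi * z) = 0" by simp
  with \<open>Im z \<noteq> 0\<close> show False by simp
qed

lemma pf:
  fixes n u :: complex
  assumes "n + u \<noteq> 0" "n - u \<noteq> 0"
  shows "inverse ((n + u)/4) + inverse ((n - u)/4) = 8 * (n / (n^2 - u^2))"
proof -
  have "n^2 - u^2 = (n+u)*(n-u)" by (simp add: power2_eq_square algebra_simps)
  thus ?thesis using assms by (simp add: field_simps)
qed

lemma key: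
  fixes u :: complex
  assumes u: "Im u \<noteq> 0"
  shows "(\<lambda>j. of_nat (4*j+1) / ((of_nat (4*j+1))^2 - u^2) - of_nat (4*j+3) / ((of_nat (4*j+3))^2 - u^2))
     sums (of_real pi / (4 * cos (of_real pi * u / 2)))"
proof -
  define x1 where "x1 = (1 + u) / 4"
  define x2 where "x2 = (3 + u) / 4"
  define y1 where "y1 = (1 - u) / 4"
  define y2 where "y2 = (3 - u) / 4"
  have Im: "Im x1 \<noteq> 0" "Im x2 \<noteq> 0" "Im y1 \<noteq> 0" "Im y2 \<noteq> 0"
    using u by (auto simp: x1_def x2_def y1_def y2_def)
  have nz: "x1 \<noteq> 0" "x2 \<noteq> 0" "y1 \<noteq> 0" "y2 \<noteq> 0" using Im by auto
  have S: "(\<lambda>j. (inverse (of_nat j + x1) - inverse (of_nat j + x2)) + (inverse (of_nat j + y1) - inverse (of_nat j + y2)))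
      sums ((Digamma x2 - Digamma x1) + (Digamma y2 - Digamma y1))"
    by (intro sums_add dg_diff nz)
  have r1: "Digamma x2 - Digamma y1 = of_real pi * cos (of_real pi * y1) / sin (of_real pi * y1)"
    using digamma_refl[OF Im_nz_not_Int[OF Im(3)]] by (simp add: x2_def y1_def field_simps)
  have r2: "Digamma y2 - Digamma x1 = of_real pi * cos (of_real pi * x1) / sin (of_real pi * x1)"
    using digamma_refl[OF Im_nz_not_Int[OF Im(1)]] by (simp add: y2_def x1_def field_simps)
  have "(Digamma x2 - Digamma x1) + (Digamma y2 - Digamma y1)
      = of_real pi * (cos (of_real pi * x1) / sin (of_real pi * x1) + cos (of_real pi * y1) / sin (of_real pi * y1))"
    using r1 r2 by (simp add: algebra_simps)
  also have "\<dots> = of_real pi * (2 / cos (of_real pi * u / 2))"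
    using trig_aux[of u] sin_nz[OF Im(1)] cos_nz[OF Im(1)] by (simp add: x1_def y1_def)
  finally have S2: "(\<lambda>j. (inverse (of_nat j + x1) - inverse (of_nat j + x2)) + (inverse (of_nat j + y1) - inverse (of_nat j + y2)))
      sums (of_real pi * (2 / cos (of_real pi * u / 2)))" using S by simp
  have T: "(inverse (of_nat j + x1) - inverse (of_nat j + x2)) + (inverse (of_nat j + y1) - inverse (of_nat j + y2))
      = 8 * (of_nat (4*j+1) / ((of_nat (4*j+1))^2 - u^2) - of_nat (4*j+3) / ((of_nat (4*j+3))^2 - u^2))" for j
  proof -
    have e: "of_nat j + x1 = (of_nat (4*j+1) + u)/4" "of_nat j + y1 = (of_nat (4*j+1) - u)/4"
            "of_nat j + x2 = (of_nat (4*j+3) + u)/4" "of_nat j + y2 = (of_nat (4*j+3) - u)/4"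
      by (simp_all add: x1_def x2_def y1_def y2_def field_simps)
    have ne: "(of_nat m :: complex) + u \<noteq> 0" "(of_nat m :: complex) - u \<noteq> 0" for m
      using u by (auto dest: arg_cong[where f=Im])
    have "(inverse (of_nat j + x1) - inverse (of_nat j + x2)) + (inverse (of_nat j + y1) - inverse (of_nat j + y2))
       = (inverse ((of_nat (4*j+1) + u)/4) + inverse ((of_nat (4*j+1) - u)/4))
         - (inverse ((of_nat (4*j+3) + u)/4) + inverse ((of_nat (4*j+3) - u)/4))"
      unfolding e by (simp add: algebra_simps)
    also have "\<dots> = 8 * (of_nat (4*j+1) / ((of_nat (4*j+1))^2 - u^2)) - 8 * (of_nat (4*j+3) / ((of_nat (4*j+3))^2 - u^2))"
      by (simp only: pf[OF ne(1)[of "4*j+1"] ne(2)[of "4*j+1"]] pf[OF ne(1)[of "4*j+3"] ne(2)[of "4*j+3"]])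
    finally show ?thesis by (simp add: algebra_simps)
  qed
  have v: "(1/8::complex) * (of_real pi * (2 / cos (of_real pi * u / 2))) = of_real pi / (4 * cos (of_real pi * u / 2))" by simp
  have w: "(1/8::complex) * (8 * X) = X" for X by simp
  from sums_mult[OF S2, of "1/8"] show ?thesis
    unfolding T v w .
qed



lemma evenodd_lim:
  fixes X :: "nat \<Rightarrow> 'a::real_normed_vector"
  assumes "(\<lambda>j. X (2*j)) \<longlonglongrightarrow> L" "(\<lambda>j. X (2*j+1)) \<longlonglongrightarrow> L"
  shows "X \<longlonglongrightarrow> L"
proof (rule LIMSEQ_I)
  fix r :: real assume r: "0 < r"
  from LIMSEQ_D[OF assms(1) r] obtain N1 where N1: "\<forall>j\<ge>N1. norm (X (2*j) - L) < r" by blast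
  from LIMSEQ_D[OF assms(2) r] obtain N2 where N2: "\<forall>j\<ge>N2. norm (X (2*j+1) - L) < r" by blast
  show "\<exists>no. \<forall>n\<ge>no. norm (X n - L) < r"
  proof (intro exI allI impI)
    fix n assume n: "n \<ge> 2*(N1+N2)"
    show "norm (X n - L) < r"
    proof (cases "even n")
      case True
      then obtain j where "n = 2*j" by blast
      with n N1 show ?thesis by auto
    next
      case False
      then obtain j where "n = 2*j+1" using oddE by blast
      with n N2 show ?thesis by auto
    qed
  qed
qed

lemma group2:
  fixes f :: "nat \<Rightarrow> 'a::real_normed_vector"
  assumes f0: "f \<longlonglongrightarrow> 0" and s: "(\<lambda>j. f (2*j) + f (2*j+1)) sums S"
  shows "f sums S"
proof -
  have P: "(\<Sum>i<2*j. f i) = (\<Sum>i<j. f (2*i) + f (2*i+1))" for j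
    by (induction j) (simp_all add: algebra_simps)
  have e: "(\<lambda>j. \<Sum>i<2*j. f i) \<longlonglongrightarrow> S" using s unfolding sums_def P .
  have f2: "(\<lambda>j. f (2*j)) \<longlonglongrightarrow> 0"
    by (rule LIMSEQ_subseq_LIMSEQ[OF f0, unfolded o_def]) (auto simp: strict_mono_def)
  have o: "(\<lambda>j. \<Sum>i<2*j+1. f i) \<longlonglongrightarrow> S"
  proof -
    have "(\<lambda>j. (\<Sum>i<2*j. f i) + f (2*j)) \<longlonglongrightarrow> S + 0" by (intro tendsto_add e f2)
    thus ?thesis by simp
  qed
  show ?thesis unfolding sums_def by (rule evenodd_lim[OF e o])
qed



lemma chi_vals:
  "chi (int (4*j)) = 0" "chi (int (4*j+1)) = 1" "chi (int (4*j+2)) = 0" "chi (int (4*j+3)) = -1"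
  by (simp_all add: chi_def)

theorem lemma2p1:
  fixes b c :: real
  assumes "b > 0" and "c > 0"
  shows "(\<lambda>n::nat. of_int (chi (int n)) * real n / ((real n ^ 2 + b^2)^2 + c^2)) sums
           (pi / (4 * c) * (sinh (pi / 2 * Afun b c) * sin (pi / 2 * Bfun b c))
              / (sinh (pi / 2 * Afun b c) ^ 2 + cos (pi / 2 * Bfun b c) ^ 2))
       \<and> (\<lambda>n::nat. of_int (chi (int n)) * real n * (real n ^ 2 + b^2) / ((real n ^ 2 + b^2)^2 + c^2)) sums
           (pi / 4 * (cosh (pi / 2 * Afun b c) * cos (pi / 2 * Bfun b c))
              / (cosh (pi / 2 * Afun b c) ^ 2 - sin (pi / 2 * Bfun b c) ^ 2))"
proof -
  define A where "A = Afun b c"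
  define B where "B = Bfun b c"
  define s where "s = sqrt (b^4 + c^2)"
  have sb: "s > b^2"
  proof -
    have e4: "(b^2)^2 = b^4" by simp
    have "(b^2)^2 < b^4 + c^2" unfolding e4 using assms by simp
    hence "sqrt ((b^2)^2) < s" unfolding s_def by (intro real_sqrt_less_mono)
    thus ?thesis by (simp only: real_sqrt_abs abs_power2)
  qed
  have s2: "s^2 = b^4 + c^2" unfolding s_def by (simp add: add_nonneg_nonneg)
  have sp: "0 \<le> (s + b^2)/2" "0 \<le> (s - b^2)/2" using sb by (auto intro: add_nonneg_nonneg less_imp_le order.trans[OF zero_le_power2])
  have bp: "0 < b^2" using assms by simp
  have sp2: "0 < s + b^2" using bp sb by linarith
  have A2: "A^2 = (s + b^2)/2" unfolding A_def Afun_def s_def[symmetric] 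
    by (subst real_sqrt_pow2) (use sp in auto)
  have B2: "B^2 = (s - b^2)/2" unfolding B_def Defs.Bfun_def s_def[symmetric]
    by (subst real_sqrt_pow2) (use sp in auto)
  have Apos: "A > 0" unfolding A_def Afun_def s_def[symmetric] using sp2 by auto
  have Bpos: "B > 0" unfolding B_def Defs.Bfun_def s_def[symmetric] using sb by auto
  have AB1: "A^2 - B^2 = b^2" using A2 B2 by simp
  have "(A*B)^2 = (c/2)^2"
  proof -
    have "(A*B)^2 = A^2 * B^2" by (simp add: power_mult_distrib)
    also have "\<dots> = (s^2 - (b^2)^2)/4" unfolding A2 B2 by (simp add: field_simps power2_eq_square)
    also have "\<dots> = (c/2)^2" using s2 by (simp add: power2_eq_square field_simps power4_eq_xxxx)
    finally show ?thesis .
  qed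
  hence AB2: "2 * (A * B) = c" using Apos Bpos assms by (subst (asm) power2_eq_iff_nonneg) auto
  define u where "u = Complex (-B) A"
  have u2: "u^2 = Complex (-(b^2)) (-c)"
    using AB1 AB2 by (simp add: u_def power2_eq_square complex_eq_iff algebra_simps)
  have den: "(of_nat n :: complex)^2 - u^2 = Complex (real n^2 + b^2) c" for n
    by (simp add: u2 complex_eq_iff)
  have Imu: "Im u \<noteq> 0" using Apos by (simp add: u_def)
  define g where "g n = (of_nat n :: complex) / ((of_nat n)^2 - u^2)" for n
  define F where "F n = of_int (chi (int n)) * g n" for n
  define V where "V = of_real pi / (4 * cos (of_real pi * u / 2))"
  have K: "(\<lambda>j. g (4*j+1) - g (4*j+3)) sums V"
    using key[OF Imu] unfolding g_def V_def .
  have gn: "norm (g n) \<le> 1 / real n" if "n > 0" for n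
  proof -
    have "real n ^ 2 \<le> real n^2 + b^2" by simp
    also have "\<dots> \<le> cmod (Complex (real n^2 + b^2) c)"
      using complex_Re_le_cmod[of "Complex (real n^2 + b^2) c"] by simp
    finally have le: "real n ^ 2 \<le> cmod (Complex (real n^2 + b^2) c)" .
    have np: "0 < real n ^ 2" using that by simp
    have cp: "0 < cmod (Complex (real n^2 + b^2) c)" using np le by linarith
    have "norm (g n) = real n / cmod (Complex (real n^2 + b^2) c)"
      by (simp add: g_def den norm_divide)
    also have "\<dots> \<le> real n / real n ^ 2"
      using le np cp by (intro divide_left_mono) auto
    also have "\<dots> = 1 / real n" by (simp add: power2_eq_square)
    finally show ?thesis .
  qed
  have F0: "F \<longlonglongrightarrow> 0"
  proof (rule Lim_null_comparison[OF _ lim_1_over_n])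
    show "\<forall>\<^sub>F n in sequentially. norm (F n) \<le> 1 / real n"
      using eventually_gt_at_top[of "0::nat"]
    proof eventually_elim
      case (elim n)
      have "norm (F n) \<le> norm (g n)"
        by (auto simp: F_def norm_mult chi_def)
      with gn[OF elim] show ?case by simp
    qed
  qed
  define h where "h j = F (2*j) + F (2*j+1)" for j
  have h0: "h \<longlonglongrightarrow> 0"
  proof -
    have a: "(\<lambda>j. F (2*j)) \<longlonglongrightarrow> 0"
      by (rule LIMSEQ_subseq_LIMSEQ[OF F0, unfolded o_def]) (auto simp: strict_mono_def)
    have b: "(\<lambda>j. F (2*j+1)) \<longlonglongrightarrow> 0"
      by (rule LIMSEQ_subseq_LIMSEQ[OF F0, unfolded o_def]) (auto simp: strict_mono_def)
    show ?thesis unfolding h_def using tendsto_add[OF a b] by simp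
  qed
  have blk: "h (2*j) + h (2*j+1) = g (4*j+1) - g (4*j+3)" for j
  proof -
    have e: "2*(2*j) = 4*j" "2*(2*j)+1 = 4*j+1" "2*(2*j+1) = 4*j+2" "2*(2*j+1)+1 = 4*j+3" "4*j+2+1 = 4*j+3" by simp_all
    show ?thesis unfolding h_def e F_def chi_vals by (simp add: g_def minus_divide_left)
  qed
  have hs: "h sums V" by (rule group2[OF h0]) (use K in \<open>simp only: blk\<close>)
  have FS: "F sums V" by (rule group2[OF F0]) (use hs[unfolded h_def[abs_def]] in simp)
  define p where "p = pi / 2 * A"
  define q where "q = pi / 2 * B"
  have cw: "cos (of_real pi * u / 2) = Complex (cos q * cosh p) (sin q * sinh p)"
  proof (rule complex_eqI)
    have r: "Re (of_real pi * u / 2) = - q" "Im (of_real pi * u / 2) = p"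
      by (simp_all add: u_def p_def q_def)
    show "Re (cos (of_real pi * u / 2)) = Re (Complex (cos q * cosh p) (sin q * sinh p))"
      unfolding Re_cos r by (simp add: cosh_def)
    show "Im (cos (of_real pi * u / 2)) = Im (Complex (cos q * cosh p) (sin q * sinh p))"
      unfolding Im_cos r by (simp add: sinh_def field_simps)
  qed
  define D where "D = (cos q * cosh p)^2 + (sin q * sinh p)^2"
  have D1: "D = cosh p ^ 2 - sin q ^ 2"
    unfolding D_def by (simp add: power_mult_distrib sinh_square_eq cos_squared_eq algebra_simps)
  have D2: "D = sinh p ^ 2 + cos q ^ 2"
    unfolding D_def by (simp add: power_mult_distrib cosh_square_eq sin_squared_eq algebra_simps)
  have pp: "p > 0" using Apos by (simp add: p_def)
  have Dp: "D > 0" unfolding D2 using pp by (simp add: add_pos_nonneg)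
  have V2: "V = of_real pi / Complex (4 * (cos q * cosh p)) (4 * (sin q * sinh p))"
    unfolding V_def cw by (rule arg_cong[where f="\<lambda>w. of_real pi / w"]) (simp add: complex_eq_iff)
  have ReV: "Re V = pi / 4 * (cosh p * cos q) / D"
    using Dp by (simp add: V2 Re_divide D_def field_simps power2_eq_square)
  have ImV: "Im V = - (pi / 4 * (sinh p * sin q) / D)"
    using Dp by (simp add: V2 Im_divide D_def field_simps power2_eq_square)
  have ReF: "Re (F n) = of_int (chi (int n)) * real n * (real n ^ 2 + b^2) / ((real n ^ 2 + b^2)^2 + c^2)" for n
    by (simp add: F_def g_def den Re_divide)
  have ImF: "Im (F n) = - c * (of_int (chi (int n)) * real n / ((real n ^ 2 + b^2)^2 + c^2))" for n
    by (simp add: F_def g_def den Im_divide)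
  from FS have S1: "(\<lambda>n. Re (F n)) sums Re V" and S2: "(\<lambda>n. Im (F n)) sums Im V"
    by (simp_all add: sums_complex_iff)
  have S3: "(\<lambda>n. (-1/c) * Im (F n)) sums ((-1/c) * Im V)" by (rule sums_mult[OF S2])
  have f1: "(\<lambda>n. (-1/c) * Im (F n)) = (\<lambda>n. of_int (chi (int n)) * real n / ((real n ^ 2 + b^2)^2 + c^2))"
    using assms by (simp add: ImF)
  have v1: "(-1/c) * Im V = pi / (4 * c) * (sinh p * sin q) / (sinh p ^ 2 + cos q ^ 2)"
    using assms by (simp add: ImV D2)
  have f2: "(\<lambda>n. Re (F n)) = (\<lambda>n. of_int (chi (int n)) * real n * (real n ^ 2 + b^2) / ((real n ^ 2 + b^2)^2 + c^2))"
    by (simp add: ReF)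
  show ?thesis
    using S3 S1 unfolding f1 f2 v1 ReV D1 p_def q_def A_def B_def by (rule conjI)
qed

end
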